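(* Fix $a>1$. For $n\ge1$ let $\mathsf{F}$ be the $n\times n$ lower-triangular matrix with ones on the diagonal, $-a$ on the first subdiagonal and zeros elsewhere, and let $\mu_{n,1},\ldots,\mu_{n,n}$ be the eigenvalues of $\mathsf{F}'\mathsf{F}$. Let $\alpha'=\inf_{n\in\mathbb{N},i\in[n]}\mu_{n,i}$ and $\beta=(a+1)^2$, and let $g(w)=1+a^2-2a\cos w$. For any bounded, $L$-Lipschitz function $F$ on $[\alpha',\beta]$ that is nondecreasing (or nonincreasing), there is a constant $C_L>0$ depending only on $L$ and $\max|F|$ such that for all $n\ge1$, $$\left|\frac1n\sum_{i=1}^nF(\mu_{n,i})-\frac1{2\pi}\int_{-\pi}^{\pi}F(g(w))\,dw\right|\le\frac{C_L}n.$$ *)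

theory Defs
  imports "HOL-Analysis.Analysis" "Jordan_Normal_Form.Char_Poly"
begin

definition Fmat :: "real \<Rightarrow> nat \<Rightarrow> real mat" where
  "Fmat a n = mat n n (\<lambda>(i, j). if i = j then 1 else if i = j + 1 then - a else 0)"

text \<open>The multiset of eigenvalues (with algebraic multiplicity) of a real square matrix whose
  characteristic polynomial splits over the reals (as for the symmetric matrix F'F).\<close>
definition eigenvalues_mset :: "real mat \<Rightarrow> real multiset" where
  "eigenvalues_mset A = (THE M. char_poly A = prod_mset (image_mset (\<lambda>x. [:- x, 1:]) M))"

definition mus :: "real \<Rightarrow> nat \<Rightarrow> real multiset" where
  "mus a n = eigenvalues_mset (transpose_mat (Fmat a n) * Fmat a n)"

definition alpha' :: "real \<Rightarrow> real" where
  "alpha' a = Inf (\<Union>n\<in>{1..}. set_mset (mus a n))"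

definition beta :: "real \<Rightarrow> real" where
  "beta a = (a + 1)^2"

definition gsym :: "real \<Rightarrow> real \<Rightarrow> real" where
  "gsym a w = 1 + a^2 - 2 * a * cos w"

end

theory Submission
  imports Defs
begin


lemma tridiag_det:
  fixes B :: "'a::comm_ring_1 mat"
  assumes B: "B \<in> carrier_mat (Suc (Suc k)) (Suc (Suc k))"
  and tri: "\<And>i j. i < Suc (Suc k) \<Longrightarrow> j < Suc (Suc k) \<Longrightarrow> Suc i < j \<or> Suc j < i \<Longrightarrow> B $$ (i,j) = 0"
  shows "det B = B $$ (Suc k, Suc k) * det (mat_delete B (Suc k) (Suc k))
     - B $$ (Suc k, k) * B $$ (k, Suc k) * det (mat_delete (mat_delete B (Suc k) (Suc k)) k k)"
proof -
  define C where "C = mat_delete B (Suc k) k"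
  have C: "C \<in> carrier_mat (Suc k) (Suc k)" unfolding C_def using mat_delete_carrier[OF B] by simp
  have Cent: "C $$ (i, j) = B $$ (i, if j < k then j else Suc j)" if "i < Suc k" "j < Suc k" for i j
    using that B unfolding C_def mat_delete_def by auto
  have "det C = (\<Sum>i<Suc k. C $$ (i,k) * cofactor C i k)"
    by (rule laplace_expansion_column[OF C], simp)
  also have "\<dots> = C $$ (k,k) * cofactor C k k"
    by (subst sum.lessThan_Suc, subst sum.neutral, auto simp: Cent tri)
  finally have dC0: "det C = C $$ (k,k) * cofactor C k k" .
  have md: "mat_delete C k k = mat_delete (mat_delete B (Suc k) (Suc k)) k k"
    by (rule eq_matI, insert B, auto simp: C_def mat_delete_def)
  have dC: "det C = B $$ (k, Suc k) * det (mat_delete (mat_delete B (Suc k) (Suc k)) k k)"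
    using dC0 md by (simp add: cofactor_def Cent)
  have "det B = (\<Sum>j<Suc (Suc k). B $$ (Suc k,j) * cofactor B (Suc k) j)"
    by (rule laplace_expansion_row[OF B], simp)
  also have "\<dots> = B $$ (Suc k, k) * cofactor B (Suc k) k + B $$ (Suc k, Suc k) * cofactor B (Suc k) (Suc k)"
    by (subst sum.lessThan_Suc, subst sum.lessThan_Suc, subst sum.neutral, auto simp: tri)
  finally show ?thesis using dC by (simp add: cofactor_def C_def)
qed

lemma Fmat_carrier: "Fmat a n \<in> carrier_mat n n" unfolding Fmat_def by auto

lemma FtF_entry:
  assumes i: "i < n" and j: "j < n"
  shows "(transpose_mat (Fmat a n) * Fmat a n) $$ (i,j) =
    (if i = j then (if i = n - 1 then 1 else 1 + a^2) else if i = Suc j \<or> j = Suc i then - a else 0)"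
proof -
  have "(transpose_mat (Fmat a n) * Fmat a n) $$ (i,j) =
     (\<Sum>k\<in>{0..<n}. (if k = i then 1 else if k = i + 1 then -a else 0) * (if k = j then 1 else if k = j + 1 then -a else 0))"
    using i j by (simp add: Fmat_def scalar_prod_def)
  also have "\<dots> = (\<Sum>k\<in>{0..<n}. (if k = i then (if i = j then 1 else if i = Suc j then -a else 0) else 0)
        + (if k = Suc i then (if Suc i = j then -a else if i = j then a^2 else 0) else 0))"
    by (rule sum.cong, auto simp: power2_eq_square)
  also have "\<dots> = (if i = j then 1 else if i = Suc j then -a else 0) + (if Suc i < n then (if Suc i = j then -a else if i = j then a^2 else 0) else 0)"
    using i by (simp add: sum.distrib)
  finally show ?thesis using i j by auto
qed

definition Tm :: "real \<Rightarrow> real \<Rightarrow> nat \<Rightarrow> nat \<Rightarrow> real mat" where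
  "Tm a x n k = mat k k (\<lambda>(i,j). if i = j then (if i = n - 1 then x - 1 else x - 1 - a^2)
     else if i = Suc j \<or> j = Suc i then a else 0)"

lemma charpoly_Tm: "poly (char_poly (transpose_mat (Fmat a n) * Fmat a n)) x = det (Tm a x n n)"
  unfolding char_poly_def
proof (rule poly_det_cong[of _ n])
  show "Tm a x n n \<in> carrier_mat n n" unfolding Tm_def by auto
  have "transpose_mat (Fmat a n) * Fmat a n \<in> carrier_mat n n" using Fmat_carrier[of a n] by (metis mult_carrier_mat transpose_carrier_mat)
  then show "char_poly_matrix (transpose_mat (Fmat a n) * Fmat a n) \<in> carrier_mat n n" by simp
  fix i j assume i: "i < n" and j: "j < n"
  show "poly (char_poly_matrix (transpose_mat (Fmat a n) * Fmat a n) $$ (i, j)) x = Tm a x n n $$ (i, j)"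
  proof -
    define G where "G = transpose_mat (Fmat a n) * Fmat a n"
    have G: "G \<in> carrier_mat n n" unfolding G_def using Fmat_carrier[of a n] by (metis mult_carrier_mat transpose_carrier_mat)
    have e: "G $$ (i,j) = (if i = j then (if i = n - 1 then 1 else 1 + a^2) else if i = Suc j \<or> j = Suc i then - a else 0)"
      unfolding G_def by (rule FtF_entry[OF i j])
    show ?thesis unfolding G_def[symmetric] char_poly_matrix_def using G i j e
      by (simp add: Tm_def)
  qed
qed


fun pp :: "real \<Rightarrow> real \<Rightarrow> nat \<Rightarrow> real" where
  "pp a x 0 = 1"
| "pp a x (Suc 0) = x - 1 - a^2"
| "pp a x (Suc (Suc k)) = (x - 1 - a^2) * pp a x (Suc k) - a^2 * pp a x k"

lemma Tm_carrier: "Tm a x n k \<in> carrier_mat k k" unfolding Tm_def by auto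

lemma Tm_delete: "mat_delete (Tm a x n (Suc k)) k k = Tm a x n k"
  by (rule eq_matI, auto simp: Tm_def mat_delete_def)

lemma Tm_tri: "i < k \<Longrightarrow> j < k \<Longrightarrow> Suc i < j \<or> Suc j < i \<Longrightarrow> Tm a x n k $$ (i,j) = 0"
  by (auto simp: Tm_def)

lemma det_Tm_lead: "k < n \<Longrightarrow> det (Tm a x n k) = pp a x k"
proof (induction k rule: less_induct)
  case (less k)
  show ?case
  proof (cases k)
    case 0
    then show ?thesis using Tm_carrier by simp
  next
    case (Suc m)
    show ?thesis
    proof (cases m)
      case 0
      then show ?thesis using Suc less.prems Tm_carrier[of a x n 1] by (simp add: det_single Tm_def)
    next
      case (Suc j)
      have kk: "k = Suc (Suc j)" using Suc \<open>k = Suc m\<close> by simp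
      have "det (Tm a x n (Suc (Suc j))) = Tm a x n (Suc (Suc j)) $$ (Suc j, Suc j) * det (Tm a x n (Suc j))
         - Tm a x n (Suc (Suc j)) $$ (Suc j, j) * Tm a x n (Suc (Suc j)) $$ (j, Suc j) * det (Tm a x n j)"
        using tridiag_det[OF Tm_carrier[of a x n "Suc (Suc j)"]] Tm_tri[where k="Suc (Suc j)" and a=a and x=x and n=n] by (simp add: Tm_delete)
      also have "\<dots> = (x - 1 - a^2) * pp a x (Suc j) - a^2 * pp a x j"
        using less.IH[of "Suc j"] less.IH[of j] less.prems kk by (simp add: Tm_def power2_eq_square)
      finally show ?thesis using kk by simp
    qed
  qed
qed

lemma det_Tm_full: assumes n1: "n \<ge> 1" shows "det (Tm a x n n) = pp a x n + a^2 * pp a x (n - 1)"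
proof (cases n)
  case 0 then show ?thesis using n1 by simp
next
  case (Suc m)
  note nm = this
  show ?thesis
  proof (cases m)
    case 0
    then show ?thesis using nm Tm_carrier[of a x n 1] by (simp add: det_single Tm_def)
  next
    case (Suc k)
    have nk: "n = Suc (Suc k)" using nm Suc by simp
    have "det (Tm a x n (Suc (Suc k))) = Tm a x n (Suc (Suc k)) $$ (Suc k, Suc k) * det (Tm a x n (Suc k))
     - Tm a x n (Suc (Suc k)) $$ (Suc k, k) * Tm a x n (Suc (Suc k)) $$ (k, Suc k) * det (Tm a x n k)"
      using tridiag_det[OF Tm_carrier[of a x n "Suc (Suc k)"]] Tm_tri[where k="Suc (Suc k)" and a=a and x=x and n=n] by (simp add: Tm_delete)
    also have "\<dots> = (x - 1) * pp a x (Suc k) - a^2 * pp a x k"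
      using nk det_Tm_lead[of "Suc k" n a x] det_Tm_lead[of k n a x] by (simp add: Tm_def power2_eq_square)
    finally show ?thesis using nk by (simp add: algebra_simps)
  qed
qed



lemma sin_rec: "sin ((y::real) + t) = 2 * cos t * sin y - sin (y - t)"
  by (simp add: sin_add sin_diff)

lemma pp_cheb: "sin t * pp a (gsym a t) k = (-a)^k * sin (real (Suc k) * t)"
proof (induction k rule: less_induct)
  case (less k)
  show ?case
  proof (cases k)
    case 0
    then show ?thesis by simp
  next
    case (Suc m)
    show ?thesis
    proof (cases m)
      case 0
      have s2: "sin (t*2) = 2 * sin t * cos t" using sin_double[of t] by (simp add: mult.commute)
      show ?thesis using Suc 0 s2 by (simp add: gsym_def algebra_simps power2_eq_square)
    next
      case (Suc j)
      have kk: "k = Suc (Suc j)" using Suc \<open>k = Suc m\<close> by simp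
      have "sin t * pp a (gsym a t) k = (gsym a t - 1 - a^2) * (sin t * pp a (gsym a t) (Suc j)) - a^2 * (sin t * pp a (gsym a t) j)"
        using kk by (simp add: algebra_simps)
      also have "\<dots> = (- 2 * a * cos t) * ((-a)^(Suc j) * sin (real (Suc (Suc j)) * t)) - a^2 * ((-a)^j * sin (real (Suc j) * t))"
        using less.IH[of "Suc j"] less.IH[of j] kk by (simp add: gsym_def)
      also have "\<dots> = a^2 * (-a)^j * (2 * cos t * sin (real (Suc (Suc j)) * t) - sin (real (Suc (Suc j)) * t - t))"
        by (simp add: algebra_simps power2_eq_square)
      also have "\<dots> = a^2 * (-a)^j * sin (real (Suc (Suc j)) * t + t)"
        by (simp only: sin_rec)
      also have "\<dots> = (-a)^k * sin (real (Suc k) * t)"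
        using kk by (simp add: algebra_simps power2_eq_square)
      finally show ?thesis .
    qed
  qed
qed

lemma pp_zero: "pp a 0 k * (a^2 - 1) = (-1)^k * (a^(2*k+2) - 1)"
proof (induction k rule: less_induct)
  case (less k)
  show ?case
  proof (cases k)
    case 0
    then show ?thesis by (simp add: power2_eq_square)
  next
    case (Suc m)
    show ?thesis
    proof (cases m)
      case 0
      then show ?thesis using Suc by (simp add: algebra_simps power2_eq_square)
    next
      case (Suc j)
      have kk: "k = Suc (Suc j)" using Suc \<open>k = Suc m\<close> by simp
      have "pp a 0 k * (a^2 - 1) = (- 1 - a^2) * (pp a 0 (Suc j) * (a^2 - 1)) - a^2 * (pp a 0 j * (a^2 - 1))"
        using kk by (simp add: algebra_simps)
      also have "\<dots> = (- 1 - a^2) * ((-1)^(Suc j) * (a^(2*Suc j+2) - 1)) - a^2 * ((-1)^j * (a^(2*j+2) - 1))"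
        using less.IH[of "Suc j"] less.IH[of j] kk by simp
      also have "\<dots> = (-1)^k * (a^(2*k+2) - 1)"
        using kk by (simp add: algebra_simps power2_eq_square power_add)
      finally show ?thesis .
    qed
  qed
qed



definition CP :: "real \<Rightarrow> nat \<Rightarrow> real poly" where
  "CP a n = char_poly (transpose_mat (Fmat a n) * Fmat a n)"

definition lam :: "real \<Rightarrow> nat \<Rightarrow> nat \<Rightarrow> real" where
  "lam a n j = (if j = 0 then 0 else gsym a (real j * pi / real (Suc n)))"

lemma poly_CP: "n \<ge> 1 \<Longrightarrow> poly (CP a n) x = pp a x n + a^2 * pp a x (n - 1)"
  unfolding CP_def charpoly_Tm using det_Tm_full by simp

lemma gsym_ge: "a > 0 \<Longrightarrow> gsym a w \<ge> (a - 1)^2"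
proof -
  assume "a > 0"
  then have "2 * a * cos w \<le> 2 * a" by simp
  then show ?thesis unfolding gsym_def by (simp add: power2_eq_square algebra_simps)
qed

lemma gsym_le: "a > 0 \<Longrightarrow> gsym a w \<le> (a + 1)^2"
proof -
  assume "a > 0"
  then have "a * (-1) \<le> a * cos w" by (intro mult_left_mono) auto
  then show ?thesis unfolding gsym_def by (simp add: power2_eq_square algebra_simps)
qed

lemma gsym_mono: "a > 0 \<Longrightarrow> 0 \<le> u \<Longrightarrow> u < v \<Longrightarrow> v \<le> pi \<Longrightarrow> gsym a u < gsym a v"
  unfolding gsym_def using cos_monotone_0_pi[of u v] by simp

lemma gsym_mono_le: "a > 0 \<Longrightarrow> 0 \<le> u \<Longrightarrow> u \<le> v \<Longrightarrow> v \<le> pi \<Longrightarrow> gsym a u \<le> gsym a v"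
  using gsym_mono[of a u v] by (cases "u = v") auto

lemma pi_n_pos: "0 < pi + pi * real n" by (simp add: add_pos_nonneg)

lemma pi_j_n: "j \<le> n \<Longrightarrow> pi * real j < pi + pi * real n"
proof -
  assume "j \<le> n"
  then have "pi * real j \<le> pi * real n" by simp
  then show ?thesis using pi_gt_zero by linarith
qed

lemma CP_zero:
  assumes a: "a > 1" and n: "n \<ge> 1"
  shows "poly (CP a n) 0 = (-1)^n"
proof -
  obtain m where m: "n = Suc m" using n by (cases n) auto
  have a2: "a^2 - 1 \<noteq> 0" using a by (simp add: power2_eq_square) (smt (verit) mult_less_cancel_right1)
  have "poly (CP a n) 0 * (a^2 - 1) = pp a 0 n * (a^2 - 1) + a^2 * (pp a 0 m * (a^2 - 1))"
    using poly_CP[OF n] m by (simp add: algebra_simps)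
  also have "\<dots> = (-1)^n * (a^2 - 1)"
    unfolding pp_zero m by (simp add: algebra_simps power_add power2_eq_square)
  finally show ?thesis using a2 by simp
qed

lemma CP_lam:
  assumes a: "a > 1" and j: "1 \<le> j" "j \<le> n"
  shows "poly (CP a n) (lam a n j) = a^2 * (-a)^(n - 1) * (-1)^(Suc j)"
proof -
  obtain m where m: "n = Suc m" using j by (cases n) auto
  define t where "t = real j * pi / real (Suc n)"
  have t0: "0 < t" "t < pi" using j pi_n_pos[of n] pi_j_n[of j n] unfolding t_def by (auto simp: field_simps)
  have st: "sin t > 0" using t0 sin_gt_zero by blast
  have l: "lam a n j = gsym a t" using j unfolding lam_def t_def by simp
  have e1: "real (Suc n) * t = real j * pi" unfolding t_def by simp
  have "sin t * pp a (gsym a t) n = 0"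
    unfolding pp_cheb e1 by (simp add: sin_zero_iff_int2)
  then have p1: "pp a (gsym a t) n = 0" using st by simp
  have e2: "real (Suc m) * t = real j * pi - t" using e1 m by (simp add: algebra_simps)
  have "sin (real j * pi - t) = - ((-1)^j * sin t)"
    by (simp add: sin_diff)
  then have "sin t * pp a (gsym a t) m = sin t * ((-a)^m * (-1)^(Suc j))"
    unfolding pp_cheb e2 by simp
  then have p2: "pp a (gsym a t) m = (-a)^m * (-1)^(Suc j)" using st by (subst (asm) mult_left_cancel) auto
  show ?thesis using poly_CP[of n a "gsym a t"] j p1 p2 m l by simp
qed

lemma CP_sign:
  assumes a: "a > 1" and j: "j \<le> n" and n: "n \<ge> 1"
  shows "(-1)^(n+j) * poly (CP a n) (lam a n j) > 0"
proof (cases "j = 0")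
  case True
  have l0: "lam a n j = 0" using True by (simp add: lam_def)
  have "(-1::real)^(n+j) * (-1)^n = (-1)^(2 * n)" using True by (simp only: power_add add_0_right mult_2)
  also have "\<dots> = 1" by (simp only: power_mult) simp
  finally show ?thesis unfolding l0 CP_zero[OF a n] by simp
next
  case False
  obtain m where m: "n = Suc m" using n by (cases n) auto
  have j1: "1 \<le> j" using False by simp
  have pv: "poly (CP a n) (lam a n j) = a^2 * ((-1)^m * a^m) * (-1)^(Suc j)"
  proof -
    have e: "(-a)^(n-1) = (-1)^m * a^m" using m power_minus[of a m] by simp
    show ?thesis unfolding CP_lam[OF a j1 j] e ..
  qed
  have "(-1)^(n+j) * poly (CP a n) (lam a n j) = (a^2 * a^m) * ((-1)^(n+j) * (-1)^m * (-1)^(Suc j))"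
    unfolding pv by (simp only: mult_ac)
  also have "(-1::real)^(n+j) * (-1)^m * (-1)^(Suc j) = (-1)^(n + j + m + Suc j)"
    by (simp only: power_add)
  also have "n + j + m + Suc j = 2 * (m + j + 1)" using m by simp
  also have "(-1::real)^(2 * (m + j + 1)) = 1" by (simp only: power_mult) simp
  finally show ?thesis using a by simp
qed

lemma lam_mono:
  assumes a: "a > 1" and j: "j < n"
  shows "lam a n j < lam a n (Suc j)"
proof (cases "j = 0")
  case True
  have "0 < (a - 1)^2" using a by simp
  also have "\<dots> \<le> lam a n (Suc j)" unfolding lam_def using gsym_ge a by simp
  finally show ?thesis using True by (simp add: lam_def)
next
  case False
  have "gsym a (real j * pi / real (Suc n)) < gsym a (real (Suc j) * pi / real (Suc n))"
    by (rule gsym_mono, insert a j pi_n_pos[of n] pi_j_n[of "Suc j" n], auto simp: field_simps)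
  then show ?thesis using False by (simp add: lam_def)
qed



lemma roots_exist:
  assumes a: "a > 1" and n: "n \<ge> 1"
  shows "\<exists>r. \<forall>j<n. lam a n j < r j \<and> r j < lam a n (Suc j) \<and> poly (CP a n) (r j) = 0"
proof -
  have "\<forall>j. \<exists>x. j < n \<longrightarrow> lam a n j < x \<and> x < lam a n (Suc j) \<and> poly (CP a n) x = 0"
  proof
    fix j
    show "\<exists>x. j < n \<longrightarrow> lam a n j < x \<and> x < lam a n (Suc j) \<and> poly (CP a n) x = 0"
    proof (cases "j < n")
      case True
      let ?P = "poly (CP a n) (lam a n j)" and ?Q = "poly (CP a n) (lam a n (Suc j))"
      have s1: "(-1)^(n+j) * ?P > 0" using CP_sign[OF a _ n, of j] True by simp
      have s2: "(-1)^(n + Suc j) * ?Q > 0" using CP_sign[OF a _ n, of "Suc j"] True by simp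
      have "0 < ((-1)^(n+j) * ?P) * ((-1)^(n + Suc j) * ?Q)" by (rule mult_pos_pos[OF s1 s2])
      also have "\<dots> = ((-1)^(n+j) * (-1)^(n+j)) * (- (?P * ?Q))" by (simp add: algebra_simps)
      also have "(-1::real)^(n+j) * (-1)^(n+j) = 1" by (simp flip: power_add add: power_mult_distrib[symmetric])
      finally have "?P * ?Q < 0" by simp
      then obtain x where "x > lam a n j" "x < lam a n (Suc j)" "poly (CP a n) x = 0"
        using poly_IVT[OF lam_mono[OF a True]] by blast
      then show ?thesis by blast
    qed simp
  qed
  from choice[OF this] show ?thesis by blast
qed

lemma CP_factor:
  assumes a: "a > 1" and n: "n \<ge> 1"
    and r: "\<forall>j<n. lam a n j < r j \<and> r j < lam a n (Suc j) \<and> poly (CP a n) (r j) = 0"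
  shows "CP a n = (\<Prod>j<n. [:- r j, 1:])" and "inj_on r {..<n}" and "\<And>j k. j < k \<Longrightarrow> k < n \<Longrightarrow> r j < r k"
proof -
  have step: "r j < r (Suc j)" if "Suc j < n" for j
  proof -
    have "r j < lam a n (Suc j)" "lam a n (Suc j) < r (Suc j)" using r that by auto
    then show ?thesis by linarith
  qed
  show lt: "r j < r k" if "j < k" "k < n" for j k
    using that
  proof (induction k)
    case 0 then show ?case by simp
  next
    case (Suc k)
    then show ?case using step[of k] by (auto simp: less_Suc_eq)
  qed
  show inj: "inj_on r {..<n}"
  proof (rule inj_onI)
    fix x y assume xy: "x \<in> {..<n}" "y \<in> {..<n}" "r x = r y"
    show "x = y"
    proof (rule ccontr)
      assume "x \<noteq> y"
      then have "x < y \<or> y < x" by arith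
      then show False using lt[of x y] lt[of y x] xy by auto
    qed
  qed
  define P where "P = (\<Prod>j<n. [:- r j, 1:])"
  have degP: "degree P = n"
    unfolding P_def by (subst degree_prod_eq_sum_degree) auto
  have lcP: "coeff P n = 1"
    using lead_coeff_prod[of "\<lambda>j. [:- r j, 1:]" "{..<n}"] degP unfolding P_def by simp
  define D where "D = CP a n - P"
  have Fc: "transpose_mat (Fmat a n) * Fmat a n \<in> carrier_mat n n"
    using Fmat_carrier[of a n] by (metis mult_carrier_mat transpose_carrier_mat)
  have dCP: "degree (CP a n) = n" "coeff (CP a n) n = 1"
    using degree_monic_char_poly[OF Fc] unfolding CP_def by auto
  have "D = 0"
  proof (rule ccontr)
    assume D0: "D \<noteq> 0"
    have "degree D \<le> n" unfolding D_def using degree_diff_le[of "CP a n" n P] dCP degP by simp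
    moreover have "coeff D n = 0" unfolding D_def using dCP lcP by simp
    moreover have "degree D \<noteq> n"
    proof
      assume "degree D = n"
      then have "lead_coeff D = 0" using \<open>coeff D n = 0\<close> by simp
      then show False using D0 by simp
    qed
    ultimately have dD: "degree D < n" by simp
    have sub: "r ` {..<n} \<subseteq> {x. poly D x = 0}"
    proof
      fix x assume "x \<in> r ` {..<n}"
      then obtain j where j: "j < n" "x = r j" by auto
      have "(\<Prod>k<n. poly [:- r k, 1:] x) = 0" by (rule prod_zero) (use j in auto)
      then have "poly P x = 0" unfolding P_def poly_prod .
      then show "x \<in> {x. poly D x = 0}" using r j unfolding D_def by simp
    qed
    have "n = card (r ` {..<n})" using card_image[OF inj] by simp
    also have "\<dots> \<le> card {x. poly D x = 0}" by (rule card_mono[OF poly_roots_finite[OF D0] sub])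
    also have "\<dots> \<le> degree D" by (rule card_poly_roots_bound[OF D0])
    finally show False using dD by simp
  qed
  then show "CP a n = (\<Prod>j<n. [:- r j, 1:])" unfolding D_def P_def by simp
qed



lemma order_lin: "order x [:- y, 1:] = (if x = y then 1 else (0::nat))"
proof (cases "x = y")
  case True
  then show ?thesis using order_power_n_n[of x 1] by simp
next
  case False
  have "order x [:- y, 1:] = 0" by (rule order_0I) (use False in simp)
  then show ?thesis using False by simp
qed

lemma order_prod_lin: "order x (prod_mset (image_mset (\<lambda>y. [:- y, 1:]) M)) = count M (x::real)"
proof (induction M)
  case empty
  then show ?case by simp
next
  case (add y M)
  have nz: "prod_mset (image_mset (\<lambda>y. [:- y, 1:]) M) \<noteq> 0" by (auto simp: prod_mset_zero_iff pCons_eq_0_iff)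
  have l: "[:- y, 1:] \<noteq> (0::real poly)" by simp
  have "order x (prod_mset (image_mset (\<lambda>y. [:- y, 1:]) (add_mset y M)))
      = order x ([:- y, 1:] * prod_mset (image_mset (\<lambda>y. [:- y, 1:]) M))" by simp
  also have "\<dots> = order x [:- y, 1:] + order x (prod_mset (image_mset (\<lambda>y. [:- y, 1:]) M))"
    by (rule order_mult[OF no_zero_divisors[OF l nz]])
  finally show ?case using add.IH by (simp add: order_lin)
qed

lemma mus_eq:
  assumes a: "a > 1" and n: "n \<ge> 1"
    and r: "\<forall>j<n. lam a n j < r j \<and> r j < lam a n (Suc j) \<and> poly (CP a n) (r j) = 0"
  shows "mus a n = image_mset r (mset_set {..<n})"
proof -
  have cp: "CP a n = prod_mset (image_mset (\<lambda>x. [:- x, 1:]) (image_mset r (mset_set {..<n})))"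
    unfolding CP_factor(1)[OF a n r] prod_unfold_prod_mset by (simp add: image_mset.compositionality comp_def)
  show ?thesis
    unfolding mus_def eigenvalues_mset_def
  proof (rule the_equality)
    show "char_poly (transpose_mat (Fmat a n) * Fmat a n) = prod_mset (image_mset (\<lambda>x. [:- x, 1:]) (image_mset r (mset_set {..<n})))"
      using cp unfolding CP_def .
    fix M assume "char_poly (transpose_mat (Fmat a n) * Fmat a n) = prod_mset (image_mset (\<lambda>x. [:- x, 1:]) M)"
    then have "prod_mset (image_mset (\<lambda>x. [:- x, 1:]) M) = prod_mset (image_mset (\<lambda>x. [:- x, 1:]) (image_mset r (mset_set {..<n})))"
      using cp unfolding CP_def by simp
    then show "M = image_mset r (mset_set {..<n})"
      by (metis multiset_eqI order_prod_lin)
  qed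
qed

lemma sum_mus:
  assumes a: "a > 1" and n: "n \<ge> 1"
    and r: "\<forall>j<n. lam a n j < r j \<and> r j < lam a n (Suc j) \<and> poly (CP a n) (r j) = 0"
  shows "(\<Sum>\<mu>\<in>#mus a n. F \<mu>) = (\<Sum>j<n. F (r j))"
  unfolding mus_eq[OF a n r] sum_unfold_sum_mset by (simp add: image_mset.compositionality comp_def)



lemma int_bounds:
  fixes h :: "real \<Rightarrow> real"
  assumes uv: "u \<le> v" and ch: "continuous_on {u..v} h"
    and b: "\<And>x. x \<in> {u..v} \<Longrightarrow> c \<le> h x \<and> h x \<le> d"
  shows "(v - u) * c \<le> integral {u..v} h \<and> integral {u..v} h \<le> (v - u) * d"
proof -
  have ih: "h integrable_on {u..v}" by (rule integrable_continuous_interval[OF ch])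
  have "integral {u..v} (\<lambda>x. c) \<le> integral {u..v} h"
    by (rule integral_le[OF integrable_const_ivl ih]) (use b in auto)
  moreover have "integral {u..v} h \<le> integral {u..v} (\<lambda>x. d)"
    by (rule integral_le[OF ih integrable_const_ivl]) (use b in auto)
  ultimately show ?thesis using uv by simp
qed

lemma riemann_partial:
  fixes h :: "real \<Rightarrow> real"
  assumes ch: "continuous_on {0..pi} h" and mh: "mono_on {0..pi} h"
    and d: "d = pi / real (Suc n)"
  shows "m \<le> Suc n \<Longrightarrow> d * (\<Sum>k<m. h (real k * d)) \<le> integral {0..real m * d} h
       \<and> integral {0..real m * d} h \<le> d * (\<Sum>k<m. h (real (Suc k) * d))"
proof (induction m)
  case 0
  then show ?case by simp
next
  case (Suc m)
  have d0: "d > 0" using d by simp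
  have top: "real (Suc n) * d = pi" using d by simp
  have le: "real (Suc m) * d \<le> pi" using Suc.prems top d0
    by (metis mult_right_mono of_nat_le_iff less_imp_le)
  have le2: "real m * d \<le> real (Suc m) * d" using d0 by simp
  have m0: "0 \<le> real m * d" using d0 by simp
  have chs: "continuous_on {0..real (Suc m) * d} h"
    by (rule continuous_on_subset[OF ch]) (use le in auto)
  have comb: "integral {0..real m * d} h + integral {real m * d..real (Suc m) * d} h = integral {0..real (Suc m) * d} h"
    by (rule Henstock_Kurzweil_Integration.integral_combine[OF m0 le2 integrable_continuous_interval[OF chs]])
  have piece: "(real (Suc m) * d - real m * d) * h (real m * d) \<le> integral {real m * d..real (Suc m) * d} h
     \<and> integral {real m * d..real (Suc m) * d} h \<le> (real (Suc m) * d - real m * d) * h (real (Suc m) * d)"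
  proof (rule int_bounds[OF le2])
    show "continuous_on {real m * d..real (Suc m) * d} h"
      by (rule continuous_on_subset[OF ch]) (use le m0 in auto)
    fix x assume x: "x \<in> {real m * d..real (Suc m) * d}"
    show "h (real m * d) \<le> h x \<and> h x \<le> h (real (Suc m) * d)"
      using x le m0 by (auto intro!: mono_onD[OF mh])
  qed
  have dd: "real (Suc m) * d - real m * d = d" by (simp add: algebra_simps)
  have e1: "d * (\<Sum>k<Suc m. h (real k * d)) = d * (\<Sum>k<m. h (real k * d)) + d * h (real m * d)"
    by (simp add: distrib_left)
  have e2: "d * (\<Sum>k<Suc m. h (real (Suc k) * d)) = d * (\<Sum>k<m. h (real (Suc k) * d)) + d * h (real (Suc m) * d)"
    by (simp add: distrib_left)
  have IH: "d * (\<Sum>k<m. h (real k * d)) \<le> integral {0..real m * d} h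
       \<and> integral {0..real m * d} h \<le> d * (\<Sum>k<m. h (real (Suc k) * d))"
    using Suc.IH Suc.prems by simp
  show ?case unfolding e1 e2 using IH piece comb unfolding dd by linarith
qed

lemma riemann:
  fixes h :: "real \<Rightarrow> real"
  assumes ch: "continuous_on {0..pi} h" and mh: "mono_on {0..pi} h"
    and hb: "\<And>x. x \<in> {0..pi} \<Longrightarrow> \<bar>h x\<bar> \<le> M"
    and d: "d = pi / real (Suc n)"
  shows "\<bar>integral {0..pi} h - d * (\<Sum>k<n. h (real (Suc k) * d))\<bar> \<le> d * M"
proof -
  have top: "real (Suc n) * d = pi" using d by simp
  have d0: "d > 0" using d by simp
  from riemann_partial[OF ch mh d, of "Suc n"] top
  have b: "d * (\<Sum>k<Suc n. h (real k * d)) \<le> integral {0..pi} h"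
          "integral {0..pi} h \<le> d * (\<Sum>k<Suc n. h (real (Suc k) * d))" by auto
  have s1: "(\<Sum>k<Suc n. h (real k * d)) = h 0 + (\<Sum>k<n. h (real (Suc k) * d))"
    by (subst sum.lessThan_Suc_shift) simp
  have s2: "(\<Sum>k<Suc n. h (real (Suc k) * d)) = (\<Sum>k<n. h (real (Suc k) * d)) + h pi"
    using top by simp
  have h0: "\<bar>h 0\<bar> \<le> M" using hb by simp
  have hpi: "\<bar>h pi\<bar> \<le> M" using hb by simp
  have "d * (- M) \<le> d * h 0" using h0 d0 by (intro mult_left_mono) (auto simp: abs_le_iff)
  moreover have "d * h pi \<le> d * M" using hpi d0 by (intro mult_left_mono) (auto simp: abs_le_iff)
  moreover have "d * (h 0 + (\<Sum>k<n. h (real (Suc k) * d))) = d * h 0 + d * (\<Sum>k<n. h (real (Suc k) * d))"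
    by (simp add: distrib_left)
  moreover have "d * ((\<Sum>k<n. h (real (Suc k) * d)) + h pi) = d * (\<Sum>k<n. h (real (Suc k) * d)) + d * h pi"
    by (simp add: distrib_left)
  ultimately show ?thesis using b unfolding s1 s2 abs_le_iff by linarith
qed



lemma one_minus_cos: "1 - cos (t::real) \<le> t^2 / 2"
proof -
  have c: "cos t = 1 - 2 * sin (t/2) ^ 2" using cos_double_sin[of "t/2"] by simp
  have "\<bar>sin (t/2)\<bar> ^ 2 \<le> \<bar>t/2\<bar> ^ 2"
    by (rule power_mono[OF abs_sin_x_le_abs_x]) simp
  then have "sin (t/2) ^ 2 \<le> (t/2)^2" by (simp only: power2_abs)
  then show ?thesis unfolding c by (simp add: power_divide)
qed

lemma gsym_upper: "a > 0 \<Longrightarrow> gsym a t \<le> (a - 1)^2 + a * t^2"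
proof -
  assume a: "a > 0"
  have "a * (1 - cos t) \<le> a * (t^2/2)" using one_minus_cos[of t] a by (intro mult_left_mono) auto
  then show ?thesis unfolding gsym_def by (simp add: power2_eq_square algebra_simps)
qed

lemma mus_props:
  assumes a: "a > 1" and n: "n \<ge> 1" and x: "x \<in># mus a n"
  shows "0 < x \<and> x < (a + 1)^2"
proof -
  obtain r where r: "\<forall>j<n. lam a n j < r j \<and> r j < lam a n (Suc j) \<and> poly (CP a n) (r j) = 0"
    using roots_exist[OF a n] by blast
  from x[unfolded mus_eq[OF a n r]] obtain j where j: "j < n" "x = r j" by auto
  have "0 \<le> lam a n j"
  proof (cases "j = 0")
    case False
    then have "lam a n j = gsym a (real j * pi / real (Suc n))" by (simp add: lam_def)
    also have "\<dots> \<ge> (a-1)^2" using gsym_ge a by simp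
    finally show ?thesis by (rule order.trans[OF zero_le_power2])
  qed (simp add: lam_def)
  moreover have "lam a n (Suc j) \<le> (a+1)^2" unfolding lam_def using gsym_le a by simp
  moreover have "lam a n j < r j" "r j < lam a n (Suc j)" using r j(1) by auto
  ultimately show ?thesis using j(2) by linarith
qed

lemma mus_small:
  assumes a: "a > 1" and n: "n \<ge> 1"
  shows "\<exists>x. x \<in># mus a n \<and> x < (a - 1)^2 + a * pi^2 / real (Suc n)"
proof -
  obtain r where r: "\<forall>j<n. lam a n j < r j \<and> r j < lam a n (Suc j) \<and> poly (CP a n) (r j) = 0"
    using roots_exist[OF a n] by blast
  have x: "r 0 \<in># mus a n" unfolding mus_eq[OF a n r] using n by simp
  have "r 0 < lam a n 1" using r n by auto
  also have "lam a n 1 = gsym a (pi / real (Suc n))" by (simp add: lam_def)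
  also have "\<dots> \<le> (a - 1)^2 + a * (pi / real (Suc n))^2" using gsym_upper a by simp
  also have "(pi / real (Suc n))^2 \<le> pi^2 / real (Suc n)"
  proof -
    have "(pi / real (Suc n))^2 = pi^2 / (real (Suc n) * real (Suc n))" by (simp add: power2_eq_square)
    also have "\<dots> \<le> pi^2 / real (Suc n)"
      by (rule divide_left_mono) auto
    finally show ?thesis .
  qed
  then have "a * (pi / real (Suc n))^2 \<le> a * (pi^2 / real (Suc n))" using a
    by (intro mult_left_mono) auto
  then have "a * (pi / real (Suc n))^2 \<le> a * pi^2 / real (Suc n)" by simp
  finally show ?thesis using x by auto
qed

definition Sset :: "real \<Rightarrow> real set" where
  "Sset a = (\<Union>n\<in>{1..}. set_mset (mus a n))"

lemma alpha_le:
  assumes a: "a > 1" and n: "n \<ge> 1" and x: "x \<in># mus a n"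
  shows "alpha' a \<le> x"
proof -
  have "bdd_below (Sset a)"
  proof (rule bdd_belowI)
    fix y assume "y \<in> Sset a"
    then obtain m where m: "m \<ge> 1" "y \<in># mus a m" unfolding Sset_def by auto
    show "0 \<le> y" using mus_props[OF a m] by simp
  qed
  moreover have "x \<in> Sset a" unfolding Sset_def using n x by auto
  ultimately show ?thesis unfolding alpha'_def Sset_def[symmetric] by (rule cInf_lower[rotated])
qed

lemma alpha_le2:
  assumes a: "a > 1"
  shows "alpha' a \<le> (a - 1)^2"
proof (rule ccontr)
  assume "\<not> alpha' a \<le> (a - 1)^2"
  then have e: "alpha' a - (a - 1)^2 > 0" by simp
  obtain N :: nat where N: "a * pi^2 / (alpha' a - (a - 1)^2) < real N" using reals_Archimedean2 by blast
  define n where "n = Suc N"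
  have n: "n \<ge> 1" unfolding n_def by simp
  have "a * pi^2 < real (Suc n) * (alpha' a - (a - 1)^2)"
  proof -
    have "a * pi^2 < real N * (alpha' a - (a - 1)^2)" using N e by (simp add: field_simps)
    also have "\<dots> \<le> real (Suc n) * (alpha' a - (a - 1)^2)" using e unfolding n_def
      by (intro mult_right_mono) auto
    finally show ?thesis .
  qed
  then have lt: "a * pi^2 / real (Suc n) < alpha' a - (a - 1)^2" by (simp add: field_simps)
  obtain x where x: "x \<in># mus a n" "x < (a - 1)^2 + a * pi^2 / real (Suc n)" using mus_small[OF a n] by blast
  have "alpha' a \<le> x" by (rule alpha_le[OF a n x(1)])
  then show False using x(2) lt by linarith
qed



lemma final_arith:
  fixes T S I0 M N :: real
  assumes N: "N \<ge> 1" and M: "M \<ge> 0"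
    and ts: "\<bar>T - S\<bar> \<le> 2 * M" and s: "\<bar>S\<bar> \<le> N * M"
    and i: "\<bar>I0 - pi / (N + 1) * S\<bar> \<le> pi / (N + 1) * M"
  shows "\<bar>T / N - I0 / (2 * pi) * 2\<bar> \<le> 4 * M / N"
proof -
  have N0: "N > 0" using N by simp
  have N1: "N + 1 > 0" using N by simp
  have MN: "M / (N + 1) \<le> M / N" using N0 M by (intro divide_left_mono) auto
  define e where "e = I0 / pi - S / (N + 1)"
  have ee: "e = (I0 - pi / (N + 1) * S) / pi"
    unfolding e_def by (simp add: diff_divide_distrib)
  have "\<bar>e\<bar> = \<bar>I0 - pi / (N + 1) * S\<bar> / pi"
    unfolding ee by simp
  also have "\<dots> \<le> (pi / (N + 1) * M) / pi" by (rule divide_right_mono[OF i]) simp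
  also have "\<dots> = M / (N + 1)" by simp
  finally have e: "\<bar>e\<bar> \<le> M / N" using MN by linarith
  have f1: "S / (N * (N + 1)) = S / N - S / (N + 1)"
  proof -
    have "S / N - S / (N + 1) = (S * (N + 1) - S * N) / (N * (N + 1))"
      using N0 N1 by (simp add: divide_simps)
    also have "S * (N + 1) - S * N = S" by (simp add: algebra_simps)
    finally show ?thesis by simp
  qed
  have f2: "I0 / (2 * pi) * 2 = I0 / pi" by simp
  have f3: "(T - S) / N = T / N - S / N" by (simp add: diff_divide_distrib)
  have eq: "T / N - I0 / (2 * pi) * 2 = (T - S) / N + S / (N * (N + 1)) - e"
    unfolding f1 f2 f3 e_def by linarith
  have t1: "\<bar>(T - S) / N\<bar> \<le> 2 * M / N"
  proof -
    have "\<bar>(T - S) / N\<bar> = \<bar>T - S\<bar> / N" using N0 by simp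
    also have "\<dots> \<le> 2 * M / N" by (rule divide_right_mono[OF ts]) (use N0 in simp)
    finally show ?thesis .
  qed
  have "\<bar>S / (N * (N + 1))\<bar> = \<bar>S\<bar> / (N * (N + 1))" using N0 by simp
  also have "\<dots> \<le> (N * M) / (N * (N + 1))" by (rule divide_right_mono[OF s]) (use N0 in simp)
  also have "\<dots> = M / (N + 1)" using N0 by simp
  finally have t2: "\<bar>S / (N * (N + 1))\<bar> \<le> M / N" using MN by linarith
  have "\<bar>T / N - I0 / (2 * pi) * 2\<bar> \<le> \<bar>(T - S) / N\<bar> + \<bar>S / (N * (N + 1))\<bar> + \<bar>e\<bar>"
    unfolding eq by linarith
  also have "\<dots> \<le> 2 * M / N + M / N + M / N" using t1 t2 e by linarith
  also have "2 * M / N + M / N + M / N = 4 * M / N" by (simp add: add_divide_distrib[symmetric])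
  finally show ?thesis .
qed

lemma main_mono:
  fixes F :: "real \<Rightarrow> real"
  assumes a: "a > 1" and n: "n \<ge> 1"
    and lip: "L-lipschitz_on {alpha' a..beta a} F"
    and bd: "\<forall>x\<in>{alpha' a..beta a}. \<bar>F x\<bar> \<le> M"
    and mo: "mono_on {alpha' a..beta a} F"
  shows "\<bar>(\<Sum>\<mu>\<in>#mus a n. F \<mu>) / real n - integral {-pi..pi} (\<lambda>w. F (gsym a w)) / (2 * pi)\<bar> \<le> 4 * M / real n"
proof -
  define D where "D = {alpha' a..beta a}"
  have a0: "a > 0" using a by simp
  have gD: "gsym a w \<in> D" for w
    unfolding D_def beta_def using alpha_le2[OF a] gsym_ge[OF a0, of w] gsym_le[OF a0, of w] by auto
  have M0: "M \<ge> 0"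
  proof -
    have "\<bar>F (gsym a 0)\<bar> \<le> M" using bd gD[of 0] unfolding D_def by blast
    then show ?thesis by linarith
  qed
  obtain r where r: "\<forall>j<n. lam a n j < r j \<and> r j < lam a n (Suc j) \<and> poly (CP a n) (r j) = 0"
    using roots_exist[OF a n] by blast
  have rD: "r j \<in> D" if "j < n" for j
  proof -
    have x: "r j \<in># mus a n" unfolding mus_eq[OF a n r] using that by simp
    show ?thesis using alpha_le[OF a n x] mus_props[OF a n x] unfolding D_def beta_def by auto
  qed
  define d where "d = pi / real (Suc n)"
  define h where "h = (\<lambda>w. F (gsym a w))"
  have lamS: "lam a n (Suc j) = gsym a (real (Suc j) * d)" for j
    unfolding lam_def d_def by simp
  have lamj: "j \<ge> 1 \<Longrightarrow> lam a n j = gsym a (real j * d)" for j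
    unfolding lam_def d_def by simp
  have cF: "continuous_on D F" using lipschitz_on_continuous_on[OF lip] unfolding D_def .
  have cg: "continuous_on UNIV (gsym a)" unfolding gsym_def by (intro continuous_intros)
  have ch: "continuous_on {0..pi} h" unfolding h_def
    by (rule continuous_on_compose2[OF cF continuous_on_subset[OF cg]]) (use gD in auto)
  have chf: "continuous_on {-pi..pi} h" unfolding h_def
    by (rule continuous_on_compose2[OF cF continuous_on_subset[OF cg]]) (use gD in auto)
  have mh: "mono_on {0..pi} h"
  proof (rule mono_onI)
    fix u v assume uv: "u \<in> {0..pi}" "v \<in> {0..pi}" "u \<le> v"
    show "h u \<le> h v" unfolding h_def using uv gD
      by (intro mono_onD[OF mo[folded D_def]]) (auto intro!: gsym_mono_le[OF a0])
  qed
  have hb: "\<bar>h x\<bar> \<le> M" for x using bd gD unfolding h_def D_def by blast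
  define S where "S = (\<Sum>k<n. h (real (Suc k) * d))"
  define I0 where "I0 = integral {0..pi} h"
  have ri: "\<bar>I0 - d * S\<bar> \<le> d * M" unfolding I0_def S_def
    by (rule riemann[OF ch mh _ d_def]) (use hb in auto)
  have Ifull: "integral {-pi..pi} h = 2 * I0"
  proof -
    have "integral {-pi..0} h + integral {0..pi} h = integral {-pi..pi} h"
      by (rule Henstock_Kurzweil_Integration.integral_combine[OF _ _ integrable_continuous_interval[OF chf]]) auto
    moreover have "integral {-pi..0} h = integral {0..pi} h"
    proof -
      have "integral {-pi..-0} (\<lambda>x. h (-x)) = integral {0..pi} h" by (rule Henstock_Kurzweil_Integration.integral_reflect_real)
      moreover have "(\<lambda>x. h (-x)) = h" unfolding h_def gsym_def by simp
      ultimately show ?thesis by simp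
    qed
    ultimately show ?thesis unfolding I0_def by simp
  qed
  define T where "T = (\<Sum>j<n. F (r j))"
  have Tsum: "(\<Sum>\<mu>\<in>#mus a n. F \<mu>) = T" unfolding T_def by (rule sum_mus[OF a n r])
  have up: "T \<le> S" unfolding T_def S_def
  proof (rule sum_mono)
    fix j assume j: "j \<in> {..<n}"
    have jn: "j < n" using j by simp
    have "r j < lam a n (Suc j)" using r jn by blast
    moreover have "lam a n (Suc j) \<in> D" unfolding lamS by (rule gD)
    ultimately have "F (r j) \<le> F (lam a n (Suc j))"
      using rD[OF jn] by (intro mono_onD[OF mo[folded D_def]]) auto
    then show "F (r j) \<le> h (real (Suc j) * d)" unfolding h_def lamS .
  qed
  define l where "l = (\<lambda>j. if j = 0 then - M else F (lam a n j))"
  have lo: "(\<Sum>j<n. l j) \<le> T" unfolding T_def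
  proof (rule sum_mono)
    fix j assume j: "j \<in> {..<n}"
    show "l j \<le> F (r j)"
    proof (cases "j = 0")
      case True
      have "\<bar>F (r j)\<bar> \<le> M" using bd rD[of j] j unfolding D_def by blast
      then have "- M \<le> F (r j)" by linarith
      then show ?thesis using True unfolding l_def by simp
    next
      case False
      have jn: "j < n" using j by simp
      have "lam a n j < r j" using r jn by blast
      moreover have "lam a n j \<in> D" using False lamj[of j] gD by simp
      ultimately have "F (lam a n j) \<le> F (r j)"
        using rD[OF jn] by (intro mono_onD[OF mo[folded D_def]]) auto
      then show ?thesis using False unfolding l_def by simp
    qed
  qed
  have "(\<Sum>j<Suc n. l j) = l 0 + (\<Sum>j<n. l (Suc j))" by (rule sum.lessThan_Suc_shift)
  also have "(\<Sum>j<n. l (Suc j)) = S" unfolding S_def l_def h_def lamS by simp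
  finally have "(\<Sum>j<n. l j) + l n = - M + S" by (simp add: l_def)
  moreover have "l n \<le> M" using n hb[of "real n * d"] lamj[of n] unfolding l_def h_def by auto
  ultimately have lo2: "S - 2 * M \<le> T" using lo by linarith
  have ts: "\<bar>T - S\<bar> \<le> 2 * M" using up lo2 M0 by linarith
  have sS: "\<bar>S\<bar> \<le> real n * M"
  proof -
    have "\<bar>S\<bar> \<le> (\<Sum>k<n. \<bar>h (real (Suc k) * d)\<bar>)" unfolding S_def by (rule sum_abs)
    also have "\<dots> \<le> (\<Sum>k<n. M)" by (rule sum_mono) (use hb in auto)
    finally show ?thesis by simp
  qed
  have dd: "d = pi / (real n + 1)" unfolding d_def by simp
  have "\<bar>T / real n - I0 / (2 * pi) * 2\<bar> \<le> 4 * M / real n"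
  proof (rule final_arith[OF _ M0 ts sS])
    show "1 \<le> real n" using n by simp
    show "\<bar>I0 - pi / (real n + 1) * S\<bar> \<le> pi / (real n + 1) * M" using ri unfolding dd .
  qed
  moreover have "integral {-pi..pi} (\<lambda>w. F (gsym a w)) / (2 * pi) = I0 / (2 * pi) * 2"
    using Ifull unfolding h_def by simp
  ultimately show ?thesis unfolding Tsum by simp
qed

lemma sum_mset_neg: "(\<Sum>x\<in>#M. - f x) = - (\<Sum>x\<in>#M. (f x :: real))"
  by (induction M) auto

lemma neg_frac_eq: "\<bar>(- X) / N - (- Y) / P\<bar> = \<bar>X / N - Y / (P :: real)\<bar>"
proof -
  have "(- X) / N - (- Y) / P = - (X / N - Y / P)" unfolding minus_divide_left[symmetric] by simp
  then show ?thesis by simp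
qed

lemma main_bound:
  fixes F :: "real \<Rightarrow> real"
  assumes a: "a > 1" and n: "n \<ge> 1"
    and lip: "L-lipschitz_on {alpha' a..beta a} F"
    and bd: "\<forall>x\<in>{alpha' a..beta a}. \<bar>F x\<bar> \<le> M"
    and mo: "mono_on {alpha' a..beta a} F \<or> antimono_on {alpha' a..beta a} F"
  shows "\<bar>(\<Sum>\<mu>\<in>#mus a n. F \<mu>) / real n - integral {-pi..pi} (\<lambda>w. F (gsym a w)) / (2 * pi)\<bar> \<le> 4 * M / real n"
  using mo
proof
  assume "mono_on {alpha' a..beta a} F"
  then show ?thesis by (rule main_mono[OF a n lip bd])
next
  assume am: "antimono_on {alpha' a..beta a} F"
  define G where "G = (\<lambda>x. - F x)"
  have lipG: "L-lipschitz_on {alpha' a..beta a} G" unfolding G_def by (rule lipschitz_on_minus[OF lip])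
  have bdG: "\<forall>x\<in>{alpha' a..beta a}. \<bar>G x\<bar> \<le> M" using bd unfolding G_def by simp
  have moG: "mono_on {alpha' a..beta a} G"
  proof (rule mono_onI)
    fix r s assume rs: "r \<in> {alpha' a..beta a}" "s \<in> {alpha' a..beta a}" "r \<le> s"
    have "F s \<le> F r" using monotone_onD[OF am rs] .
    then show "G r \<le> G s" unfolding G_def by simp
  qed
  have h1: "\<bar>(\<Sum>\<mu>\<in>#mus a n. G \<mu>) / real n - integral {-pi..pi} (\<lambda>w. G (gsym a w)) / (2 * pi)\<bar> \<le> 4 * M / real n"
    by (rule main_mono[OF a n lipG bdG moG])
  have e1: "(\<Sum>\<mu>\<in>#mus a n. G \<mu>) = - (\<Sum>\<mu>\<in>#mus a n. F \<mu>)"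
    unfolding G_def by (rule sum_mset_neg)
  have e2: "integral {-pi..pi} (\<lambda>w. G (gsym a w)) = - integral {-pi..pi} (\<lambda>w. F (gsym a w))"
    unfolding G_def by (rule integral_neg)
  have "\<bar>(- (\<Sum>\<mu>\<in>#mus a n. F \<mu>)) / real n - (- integral {-pi..pi} (\<lambda>w. F (gsym a w))) / (2 * pi)\<bar> \<le> 4 * M / real n"
    using h1 unfolding e1 e2 .
  then show ?thesis unfolding neg_frac_eq .
qed

theorem theorem10:
  fixes a :: real
  assumes "a > 1"
  shows "\<forall>L M. \<exists>C > 0. \<forall>F :: real \<Rightarrow> real.
    (L-lipschitz_on {alpha' a..beta a} F
     \<and> (\<forall>x\<in>{alpha' a..beta a}. \<bar>F x\<bar> \<le> M)
     \<and> (mono_on {alpha' a..beta a} F \<or> antimono_on {alpha' a..beta a} F))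
    \<longrightarrow> (\<forall>n\<ge>1. \<bar>(\<Sum>\<mu>\<in>#mus a n. F \<mu>) / real n
                 - integral {-pi..pi} (\<lambda>w. F (gsym a w)) / (2 * pi)\<bar> \<le> C / real n)"
proof (intro allI)
  fix L M
  show "\<exists>C > 0. \<forall>F :: real \<Rightarrow> real.
    (L-lipschitz_on {alpha' a..beta a} F
     \<and> (\<forall>x\<in>{alpha' a..beta a}. \<bar>F x\<bar> \<le> M)
     \<and> (mono_on {alpha' a..beta a} F \<or> antimono_on {alpha' a..beta a} F))
    \<longrightarrow> (\<forall>n\<ge>1. \<bar>(\<Sum>\<mu>\<in>#mus a n. F \<mu>) / real n
                 - integral {-pi..pi} (\<lambda>w. F (gsym a w)) / (2 * pi)\<bar> \<le> C / real n)"
  proof (rule exI[of _ "4 * \<bar>M\<bar> + 1"], intro conjI allI impI)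
    show "0 < 4 * \<bar>M\<bar> + 1" by simp
    fix F :: "real \<Rightarrow> real" and n :: nat
    assume H: "L-lipschitz_on {alpha' a..beta a} F
     \<and> (\<forall>x\<in>{alpha' a..beta a}. \<bar>F x\<bar> \<le> M)
     \<and> (mono_on {alpha' a..beta a} F \<or> antimono_on {alpha' a..beta a} F)"
      and n: "1 \<le> n"
    have "\<bar>(\<Sum>\<mu>\<in>#mus a n. F \<mu>) / real n - integral {-pi..pi} (\<lambda>w. F (gsym a w)) / (2 * pi)\<bar> \<le> 4 * M / real n"
      by (rule main_bound[OF assms n H[THEN conjunct1] H[THEN conjunct2, THEN conjunct1] H[THEN conjunct2, THEN conjunct2]])
    also have "4 * M / real n \<le> (4 * \<bar>M\<bar> + 1) / real n"
      by (rule divide_right_mono) auto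
    finally show "\<bar>(\<Sum>\<mu>\<in>#mus a n. F \<mu>) / real n - integral {-pi..pi} (\<lambda>w. F (gsym a w)) / (2 * pi)\<bar> \<le> (4 * \<bar>M\<bar> + 1) / real n" .
  qed
qed


end
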